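(* Let $\mu,\nu$ be symmetric Lévy measures on $\mathbb{R}^m\setminus\{0\}$ and $\mathbb{R}^n\setminus\{0\}$, each with full support, and let $X,Y$ be random vectors in $\mathbb{R}^m$ and $\mathbb{R}^n$. Then $X$ and $Y$ are independent if and only if $V^2(X,Y)=0$.
   Context: Symmetric Lévy measure on $\mathbb{R}^d\setminus\{0\}$: $\rho(B)=\rho(-B)$ and $\int(1\wedge|r|^2)\rho(dr)<\infty$; full support: positive mass on every nonempty open subset of $\mathbb{R}^d\setminus\{0\}$. Generalized distance covariance: $V^2(X,Y)=\iint|f_{(X,Y)}(s,t)-f_X(s)f_Y(t)|^2\,\mu(ds)\,\nu(dt)\in[0,\infty]$, where $f$ denotes characteristic functions. *)

theory Defs
  imports "HOL-Probability.Probability"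
begin

text \<open>Symmetric Levy measure on R^d minus the origin, represented as a Borel measure on
  the whole space giving no mass to the origin.\<close>
definition levy_measure :: "'a::euclidean_space measure \<Rightarrow> bool" where
  "levy_measure \<rho> \<longleftrightarrow> sets \<rho> = sets borel \<and> emeasure \<rho> {0} = 0 \<and>
     (\<integral>\<^sup>+ r. ennreal (min 1 (norm r ^ 2)) \<partial>\<rho>) < \<infinity>"

definition symmetric_measure :: "'a::euclidean_space measure \<Rightarrow> bool" where
  "symmetric_measure \<rho> \<longleftrightarrow> (\<forall>B\<in>sets borel. emeasure \<rho> B = emeasure \<rho> (uminus ` B))"

definition full_support :: "'a::euclidean_space measure \<Rightarrow> bool" where
  "full_support \<rho> \<longleftrightarrow> (\<forall>U. open U \<and> U \<noteq> {} \<and> 0 \<notin> U \<longrightarrow> emeasure \<rho> U > 0)"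

definition charf :: "'w measure \<Rightarrow> ('w \<Rightarrow> 'a::euclidean_space) \<Rightarrow> 'a \<Rightarrow> complex" where
  "charf M X s = (CLINT \<omega>|M. cis (s \<bullet> X \<omega>))"

definition charf2 :: "'w measure \<Rightarrow> ('w \<Rightarrow> 'a::euclidean_space) \<Rightarrow> ('w \<Rightarrow> 'b::euclidean_space)
    \<Rightarrow> 'a \<Rightarrow> 'b \<Rightarrow> complex" where
  "charf2 M X Y s t = (CLINT \<omega>|M. cis (s \<bullet> X \<omega> + t \<bullet> Y \<omega>))"

definition dcov2 :: "'a::euclidean_space measure \<Rightarrow> 'b::euclidean_space measure \<Rightarrow> 'w measure
    \<Rightarrow> ('w \<Rightarrow> 'a) \<Rightarrow> ('w \<Rightarrow> 'b) \<Rightarrow> ennreal" where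
  "dcov2 \<mu> \<nu> M X Y = (\<integral>\<^sup>+ st. ennreal ((cmod (charf2 M X Y (fst st) (snd st)
       - charf M X (fst st) * charf M Y (snd st)))\<^sup>2) \<partial>(\<mu> \<Otimes>\<^sub>M \<nu>))"

end

theory Submission
  imports Defs
begin

inductive trig :: "('c::euclidean_space \<Rightarrow> complex) \<Rightarrow> bool" where
  base: "trig (\<lambda>x. c * cis (m \<bullet> x))"
| add: "trig f \<Longrightarrow> trig g \<Longrightarrow> trig (\<lambda>x. f x + g x)"

lemma trig_const: "trig (\<lambda>x. c)"
  using trig.base[of c 0] by simp

lemma trig_mult1: "trig g \<Longrightarrow> trig (\<lambda>x. (c * cis (m \<bullet> x)) * g x)"
proof (induction rule: trig.induct)
  case (base d n)
  have "(\<lambda>x. c * cis (m \<bullet> x) * (d * cis (n \<bullet> x))) = (\<lambda>x. (c*d) * cis ((m + n) \<bullet> x))"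
    by (auto simp: cis_mult[symmetric] inner_add_left algebra_simps)
  then show ?case using trig.base by metis
next
  case (add f g)
  then show ?case using trig.add[OF add.IH] by (simp add: distrib_left)
qed

lemma trig_mult: "trig f \<Longrightarrow> trig g \<Longrightarrow> trig (\<lambda>x. f x * g x)"
proof (induction rule: trig.induct)
  case (base c m)
  then show ?case by (rule trig_mult1)
next
  case (add f1 f2)
  then show ?case using trig.add[OF add.IH] by (simp add: distrib_right)
qed

lemma trig_sum: "finite S \<Longrightarrow> (\<And>i. i \<in> S \<Longrightarrow> trig (f i)) \<Longrightarrow> trig (\<lambda>x. \<Sum>i\<in>S. f i x)"
  by (induction S rule: finite_induct) (auto intro: trig.add trig_const)

lemma trig_meas: "trig f \<Longrightarrow> f \<in> borel_measurable borel"
  by (induction rule: trig.induct) (auto intro!: borel_measurable_continuous_onI continuous_intros)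

lemma trig_bdd: "trig f \<Longrightarrow> \<exists>B. \<forall>x. norm (f x) \<le> B"
proof (induction rule: trig.induct)
  case (base c m)
  then show ?case by (auto simp: norm_mult)
next
  case (add f g)
  then obtain B1 B2 where "\<forall>x. norm (f x) \<le> B1" "\<forall>x. norm (g x) \<le> B2" by blast
  then show ?case by (metis add_mono norm_triangle_ineq order_trans)
qed

lemma trig_integrable:
  assumes "finite_measure P" "sets P = sets borel" "trig f"
  shows "integrable P f"
proof -
  interpret finite_measure P by fact
  obtain B where B: "\<forall>x. norm (f x) \<le> B" using trig_bdd[OF assms(3)] by blast
  have "f \<in> borel_measurable P"
    using trig_meas[OF assms(3)] measurable_cong_sets[OF assms(2) refl] by blast
  then show ?thesis using B by (intro integrable_const_bound[of _ B]) auto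
qed

lemma trig_integral:
  assumes "finite_measure P" "sets P = sets borel" "finite_measure Q" "sets Q = sets borel"
    and ch: "\<And>m. (CLINT x|P. cis (m \<bullet> x)) = (CLINT x|Q. cis (m \<bullet> x))"
    and "trig f"
  shows "integral\<^sup>L P f = integral\<^sup>L Q f"
  using assms(6)
proof (induction rule: trig.induct)
  case (base c m)
  then show ?case using ch[of m] by simp
next
  case (add f g)
  then show ?case
    using trig_integrable[OF assms(1,2)] trig_integrable[OF assms(3,4)] by simp
qed

lemma inner_sum_Basis: "i \<in> Basis \<Longrightarrow> (\<Sum>b\<in>Basis. f b *\<^sub>R b) \<bullet> (i::'c::euclidean_space) = f i"
  by (simp add: inner_sum_left inner_Basis if_distrib sum.delta cong: if_cong)

lemma cos_as_cis: "complex_of_real (cos y) = (cis y + cis (- y)) / 2"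
  by (simp add: complex_eq_iff)

definition Cf :: "'c::euclidean_space \<Rightarrow> real \<Rightarrow> 'c \<Rightarrow> 'c" where
  "Cf t L x = (\<Sum>b\<in>Basis. cos (pi / L * (x \<bullet> b - t \<bullet> b)) *\<^sub>R b)"

lemma trig_cos: "trig (\<lambda>x. complex_of_real (cos (pi / L * (x \<bullet> b - t \<bullet> b))))"
proof -
  define m where "m = (pi / L) *\<^sub>R b"
  define k where "k = - (pi * (t \<bullet> b) / L)"
  have 1: "\<And>x. pi / L * (x \<bullet> b - t \<bullet> b) = m \<bullet> x + k"
    unfolding m_def k_def by (simp add: algebra_simps inner_commute diff_divide_distrib add_divide_distrib)
  have 2: "\<And>x. cis (m \<bullet> x + k) = cis k * cis (m \<bullet> x)"
    by (simp add: cis_mult add.commute)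
  have 3: "\<And>x. cis (- (m \<bullet> x + k)) = cis (-k) * cis ((-m) \<bullet> x)"
    by (simp add: cis_mult add.commute)
  have e: "\<And>x. complex_of_real (cos (pi / L * (x \<bullet> b - t \<bullet> b))) =
     (cis k / 2) * cis (m \<bullet> x) + (cis (-k) / 2) * cis ((-m) \<bullet> x)"
    unfolding 1 cos_as_cis 2 3 by (simp add: add_divide_distrib)
  show ?thesis unfolding e by (intro trig.add trig.base)
qed

lemma trig_poly:
  "real_polynomial_function p \<Longrightarrow> trig (\<lambda>x. complex_of_real (p (Cf t L x)))"
proof (induction rule: real_polynomial_function.induct)
  case (linear f)
  then interpret bounded_linear f .
  have e: "\<And>x. complex_of_real (f (Cf t L x)) =
     (\<Sum>b\<in>Basis. complex_of_real (cos (pi / L * (x \<bullet> b - t \<bullet> b))) * complex_of_real (f b))"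
    by (simp add: Cf_def sum scale)
  show ?case unfolding e
    by (intro trig_sum trig_mult trig_cos trig_const) auto
next
  case (const c)
  then show ?case by (rule trig_const)
next
  case (add f g)
  then show ?case by (simp add: trig.add)
next
  case (mult f g)
  then show ?case by (simp add: trig_mult)
qed

lemma Cf_cube: "Cf t L x \<in> cbox (- One) (One::'c::euclidean_space)"
  by (auto simp: mem_box Cf_def inner_sum_Basis)

lemma Cf_inner: "b \<in> Basis \<Longrightarrow> Cf t L x \<bullet> b = cos (pi / L * (x \<bullet> b - t \<bullet> b))"
  by (simp add: Cf_def inner_sum_Basis)

lemma cont_Cf: "continuous_on UNIV (Cf t L)"
  unfolding Cf_def by (intro continuous_intros)

lemma integrable_cb:
  fixes f :: "'c::euclidean_space \<Rightarrow> real"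
  assumes "finite_measure P" "sets P = sets borel" "continuous_on UNIV f" "\<And>x. \<bar>f x\<bar> \<le> B"
  shows "integrable P f"
proof -
  interpret finite_measure P by fact
  have "f \<in> borel_measurable P"
    using borel_measurable_continuous_onI[OF assms(3)] measurable_cong_sets[OF assms(2) refl] by blast
  then show ?thesis using assms(4) by (intro integrable_const_bound[of _ B]) auto
qed

lemma int_le:
  fixes f :: "'c \<Rightarrow> real"
  assumes "prob_space P" "integrable P f" "\<And>x. \<bar>f x\<bar> \<le> e"
  shows "\<bar>integral\<^sup>L P f\<bar> \<le> e"
proof -
  interpret prob_space P by fact
  have "\<bar>integral\<^sup>L P f\<bar> \<le> integral\<^sup>L P (\<lambda>x. \<bar>f x\<bar>)"
    using integral_norm_bound[of P f] by simp
  also have "\<dots> \<le> integral\<^sup>L P (\<lambda>x. e)"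
    using assms by (intro integral_mono) auto
  also have "\<dots> = e" by (simp add: prob_space)
  finally show ?thesis .
qed

lemma cont_eq:
  fixes G :: "'c::euclidean_space \<Rightarrow> real"
  assumes P: "prob_space P" "sets P = sets borel" and Q: "prob_space Q" "sets Q = sets borel"
    and ch: "\<And>m. (CLINT x|P. cis (m \<bullet> x)) = (CLINT x|Q. cis (m \<bullet> x))"
    and G: "continuous_on (cbox (- One) One) G"
  shows "integral\<^sup>L P (\<lambda>x. G (Cf t L x)) = integral\<^sup>L Q (\<lambda>x. G (Cf t L x))"
proof -
  let ?S = "cbox (- One) (One::'c)"
  have fP: "finite_measure P" using P(1) by (simp add: prob_space_def)
  have fQ: "finite_measure Q" using Q(1) by (simp add: prob_space_def)
  have cGC: "continuous_on UNIV (\<lambda>x. G (Cf t L x))"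
    by (rule continuous_on_compose2[OF G cont_Cf]) (auto simp: Cf_cube)
  obtain B where B: "\<And>c. c \<in> ?S \<Longrightarrow> \<bar>G c\<bar> \<le> B"
    using compact_imp_bounded[OF compact_continuous_image[OF G compact_cbox]]
    unfolding bounded_iff by auto
  have GB: "\<bar>G (Cf t L x)\<bar> \<le> B" for x using B Cf_cube by blast
  have key: "\<bar>integral\<^sup>L P (\<lambda>x. G (Cf t L x)) - integral\<^sup>L Q (\<lambda>x. G (Cf t L x))\<bar> \<le> 2 * e"
    if e: "e > 0" for e
  proof -
    obtain g where g: "polynomial_function g" "\<forall>x\<in>?S. norm (G x - g x) < e"
      using Stone_Weierstrass_polynomial_function[OF compact_cbox G e] by blast
    have rg: "real_polynomial_function g" using g(1) real_polynomial_function_eq by blast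
    have cg: "continuous_on UNIV g"
      using continuous_on_polymonial_function g(1) by blast
    have cgC: "continuous_on UNIV (\<lambda>x. g (Cf t L x))"
      by (rule continuous_on_compose2[OF cg cont_Cf]) auto
    have dB: "\<bar>G (Cf t L x) - g (Cf t L x)\<bar> \<le> e" for x
      using g(2) Cf_cube[of t L x] by fastforce
    have gB: "\<bar>g (Cf t L x)\<bar> \<le> B + e" for x using dB[of x] GB[of x] by linarith
    have iP: "integrable P (\<lambda>x. G (Cf t L x))" "integrable P (\<lambda>x. g (Cf t L x))"
      using integrable_cb[OF fP P(2) cGC GB] integrable_cb[OF fP P(2) cgC gB] by auto
    have iQ: "integrable Q (\<lambda>x. G (Cf t L x))" "integrable Q (\<lambda>x. g (Cf t L x))"
      using integrable_cb[OF fQ Q(2) cGC GB] integrable_cb[OF fQ Q(2) cgC gB] by auto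
    have "integral\<^sup>L P (\<lambda>x. complex_of_real (g (Cf t L x))) = integral\<^sup>L Q (\<lambda>x. complex_of_real (g (Cf t L x)))"
      by (rule trig_integral[OF fP P(2) fQ Q(2) ch trig_poly[OF rg]])
    then have eq: "integral\<^sup>L P (\<lambda>x. g (Cf t L x)) = integral\<^sup>L Q (\<lambda>x. g (Cf t L x))" by simp
    have "\<bar>integral\<^sup>L P (\<lambda>x. G (Cf t L x) - g (Cf t L x))\<bar> \<le> e"
      using iP dB by (intro int_le[OF P(1)]) auto
    moreover have "\<bar>integral\<^sup>L Q (\<lambda>x. G (Cf t L x) - g (Cf t L x))\<bar> \<le> e"
      using iQ dB by (intro int_le[OF Q(1)]) auto
    ultimately show ?thesis using iP iQ eq by (simp add: integral_diff)
  qed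
  show ?thesis
  proof (rule ccontr)
    let ?d = "\<bar>integral\<^sup>L P (\<lambda>x. G (Cf t L x)) - integral\<^sup>L Q (\<lambda>x. G (Cf t L x))\<bar>"
    assume "\<not> ?thesis"
    then have "?d > 0" by simp
    then have "?d \<le> 2 * (?d / 4)" by (intro key) simp
    moreover have "\<And>d::real. d > 0 \<Longrightarrow> \<not> d \<le> 2 * (d / 4)" by simp
    ultimately show False using \<open>?d > 0\<close> by blast
  qed
qed

definition Hn :: "('c::euclidean_space \<Rightarrow> real) \<Rightarrow> nat \<Rightarrow> 'c \<Rightarrow> real" where
  "Hn \<theta> n c = (\<Prod>b\<in>Basis. max 0 (min 1 (real n * (c \<bullet> b - \<theta> b))))"

definition Aset :: "('c::euclidean_space \<Rightarrow> real) \<Rightarrow> 'c set" where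
  "Aset \<theta> = {c. \<forall>b\<in>Basis. \<theta> b < c \<bullet> b}"

lemma Aset_open: "open (Aset \<theta>)"
proof -
  have "Aset \<theta> = (\<Inter>b\<in>Basis. {c. \<theta> b < c \<bullet> b})" by (auto simp: Aset_def)
  then show ?thesis by (auto intro!: open_INT open_Collect_less continuous_intros)
qed

lemma Hn_cont: "continuous_on S (Hn \<theta> n)"
  unfolding Hn_def by (intro continuous_intros)

lemma Hn_bound: "\<bar>Hn \<theta> n c\<bar> \<le> 1"
proof -
  have "0 \<le> Hn \<theta> n c" unfolding Hn_def by (intro prod_nonneg) auto
  moreover have "Hn \<theta> n c \<le> 1" unfolding Hn_def by (intro prod_le_1) auto
  ultimately show ?thesis by simp
qed

lemma Hn_lim:
  fixes c :: "'c::euclidean_space"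
  shows "(\<lambda>n. Hn \<theta> n c) \<longlonglongrightarrow> indicator (Aset \<theta>) c"
proof (cases "c \<in> Aset \<theta>")
  case True
  have "\<forall>\<^sub>F n in sequentially. \<forall>b\<in>(Basis::'c set). max 0 (min 1 (real n * (c \<bullet> b - \<theta> b))) = 1"
  proof (rule eventually_ball_finite[OF finite_Basis], rule ballI)
    fix b :: 'c assume b: "b \<in> Basis"
    then have d: "c \<bullet> b - \<theta> b > 0" using True by (auto simp: Aset_def)
    obtain N :: nat where N: "1 / (c \<bullet> b - \<theta> b) < real N" using reals_Archimedean2 by blast
    show "\<forall>\<^sub>F n in sequentially. max 0 (min 1 (real n * (c \<bullet> b - \<theta> b))) = 1"
    proof (rule eventually_sequentiallyI[of N])
      fix n assume "N \<le> n"
      then have "1 / (c \<bullet> b - \<theta> b) \<le> real n" using N by linarith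
      then have "1 \<le> real n * (c \<bullet> b - \<theta> b)" using d by (simp add: field_simps)
      then show "max 0 (min 1 (real n * (c \<bullet> b - \<theta> b))) = 1" by simp
    qed
  qed
  then have "\<forall>\<^sub>F n in sequentially. Hn \<theta> n c = 1"
    by eventually_elim (simp add: Hn_def)
  then show ?thesis using True by (simp add: tendsto_eventually)
next
  case False
  then obtain b where b: "b \<in> Basis" "c \<bullet> b \<le> \<theta> b" by (auto simp: Aset_def not_less)
  have "Hn \<theta> n c = 0" for n
  proof -
    have "real n * (c \<bullet> b - \<theta> b) \<le> 0" using b(2) by (simp add: mult_nonneg_nonpos)
    then have "max 0 (min 1 (real n * (c \<bullet> b - \<theta> b))) = 0" by simp
    then show ?thesis unfolding Hn_def using b(1) by (intro prod_zero) auto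
  qed
  then show ?thesis using False by simp
qed

lemma open_eq:
  fixes \<theta> :: "'c::euclidean_space \<Rightarrow> real"
  assumes P: "prob_space P" "sets P = sets borel" and Q: "prob_space Q" "sets Q = sets borel"
    and ch: "\<And>m. (CLINT x|P. cis (m \<bullet> x)) = (CLINT x|Q. cis (m \<bullet> x))"
  shows "measure P (Cf t L -` Aset \<theta>) = measure Q (Cf t L -` Aset \<theta>)"
proof -
  have E: "Cf t L -` Aset \<theta> \<in> sets borel"
    using continuous_open_vimage[OF Aset_open, of "Cf t L" \<theta>] cont_Cf
    by (metis borel_open continuous_on_eq_continuous_within iso_tuple_UNIV_I)
  have lim: "(\<lambda>n. integral\<^sup>L M (\<lambda>x. Hn \<theta> n (Cf t L x))) \<longlonglongrightarrow> measure M (Cf t L -` Aset \<theta>)"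
    if M: "prob_space M" "sets M = sets borel" for M :: "'c measure"
  proof -
    interpret prob_space M by fact
    have sp: "space M = UNIV" using sets_eq_imp_space_eq[OF M(2)] by simp
    have m1: "(\<lambda>x. Hn \<theta> n (Cf t L x)) \<in> borel_measurable M" for n
      unfolding measurable_cong_sets[OF M(2) refl]
      using borel_measurable_continuous_onI[OF continuous_on_compose[OF cont_Cf Hn_cont]]
      by (simp add: o_def)
    have m2: "indicator (Cf t L -` Aset \<theta>) \<in> borel_measurable M"
      using E M(2) by (simp add: borel_measurable_indicator)
    have ind: "\<And>x. indicator (Cf t L -` Aset \<theta>) x = (indicator (Aset \<theta>) (Cf t L x) :: real)"
      by (simp add: indicator_def)
    have m2': "(\<lambda>x. indicator (Aset \<theta>) (Cf t L x) :: real) \<in> borel_measurable M"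
      using m2 by (simp add: ind[symmetric])
    have "(\<lambda>n. integral\<^sup>L M (\<lambda>x. Hn \<theta> n (Cf t L x))) \<longlonglongrightarrow> integral\<^sup>L M (indicator (Cf t L -` Aset \<theta>))"
      unfolding ind by (rule integral_dominated_convergence[where w="\<lambda>_. 1"])
        (use m1 m2' in \<open>auto simp: Hn_bound Hn_lim intro!: AE_I2\<close>)
    then show ?thesis using sp by simp
  qed
  have "integral\<^sup>L P (\<lambda>x. Hn \<theta> n (Cf t L x)) = integral\<^sup>L Q (\<lambda>x. Hn \<theta> n (Cf t L x))" for n
    by (rule cont_eq[OF P Q ch Hn_cont])
  then have "(\<lambda>n. integral\<^sup>L P (\<lambda>x. Hn \<theta> n (Cf t L x))) \<longlonglongrightarrow> measure Q (Cf t L -` Aset \<theta>)"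
    using lim[OF Q] by simp
  then show ?thesis using LIMSEQ_unique[OF lim[OF P]] by simp
qed

lemma cos_cmp:
  fixes L a y :: real
  assumes "0 < L" "0 \<le> a" "a \<le> L" "\<bar>y\<bar> \<le> L"
  shows "cos (pi / L * a) < cos (pi / L * y) \<longleftrightarrow> \<bar>y\<bar> < a"
proof -
  have pL: "pi / L > 0" using assms(1) by simp
  have e1: "cos (pi / L * y) = cos (pi / L * \<bar>y\<bar>)"
    using pL by (metis abs_mult abs_of_pos cos_abs_real)
  have h1: "pi / L * a \<le> pi"
    using assms pL by (simp add: field_simps)
  have h2: "pi / L * \<bar>y\<bar> \<le> pi"
    using assms pL by (simp add: field_simps)
  have "cos (pi / L * a) < cos (pi / L * \<bar>y\<bar>) \<longleftrightarrow> pi / L * \<bar>y\<bar> < pi / L * a"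
    by (rule cos_mono_less_eq) (use pL assms h1 h2 in auto)
  also have "\<dots> \<longleftrightarrow> \<bar>y\<bar> < a" using pL mult_less_cancel_left_pos by blast
  finally show ?thesis unfolding e1 .
qed

lemma box_le:
  fixes t a :: "'c::euclidean_space"
  assumes P: "prob_space P" "sets P = sets borel" and Q: "prob_space Q" "sets Q = sets borel"
    and ch: "\<And>m. (CLINT x|P. cis (m \<bullet> x)) = (CLINT x|Q. cis (m \<bullet> x))"
    and a: "\<forall>b\<in>Basis. 0 < a \<bullet> b"
  shows "measure P (box (t - a) (t + a)) \<le> measure Q (box (t - a) (t + a))"
proof -
  interpret P: prob_space P by fact
  interpret Q: prob_space Q by fact
  have spP: "space P = UNIV" using sets_eq_imp_space_eq[OF P(2)] by simp
  have spQ: "space Q = UNIV" using sets_eq_imp_space_eq[OF Q(2)] by simp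
  let ?B = "box (t - a) (t + a)"
  have Bm: "\<And>M. sets M = sets borel \<Longrightarrow> ?B \<in> sets M" by simp
  have Bx: "x \<in> ?B \<longleftrightarrow> (\<forall>b\<in>Basis. \<bar>x \<bullet> b - t \<bullet> b\<bar> < a \<bullet> b)" for x
    by (auto simp: mem_box inner_diff_left inner_add_left abs_less_iff)
  define c where "c = 1 + (\<Sum>b\<in>Basis. a \<bullet> b)"
  have ca: "a \<bullet> b \<le> c" if "b \<in> Basis" for b
  proof -
    have "a \<bullet> b \<le> (\<Sum>b\<in>Basis. a \<bullet> b)"
      using that a by (intro member_le_sum) auto
    then show ?thesis unfolding c_def by simp
  qed
  have c0: "0 < c" using ca a by (metis order_less_le_trans SOME_Basis)
  define T where "T n = {x. real n + c < norm (x - t)}" for n :: nat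
  have Tm: "T n \<in> sets borel" for n unfolding T_def by measurable
  have step: "measure P ?B \<le> measure Q ?B + measure Q (T n)" for n
  proof -
    define L where "L = real n + c"
    have L0: "0 < L" "\<And>b. b \<in> Basis \<Longrightarrow> a \<bullet> b \<le> L" using c0 ca unfolding L_def by force+
    define \<theta> where "\<theta> b = cos (pi / L * (a \<bullet> b))" for b :: 'c
    let ?E = "Cf t L -` Aset \<theta>"
    have Em: "?E \<in> sets borel"
      using continuous_open_vimage[OF Aset_open, of "Cf t L" \<theta>] cont_Cf
      by (metis borel_open continuous_on_eq_continuous_within iso_tuple_UNIV_I)
    have mem: "x \<in> ?E \<longleftrightarrow> (\<forall>b\<in>Basis. cos (pi / L * (a \<bullet> b)) < cos (pi / L * (x \<bullet> b - t \<bullet> b)))" for x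
      by (simp add: Aset_def Cf_inner \<theta>_def)
    have sub1: "?B \<subseteq> ?E"
    proof
      fix x assume "x \<in> ?B"
      then have h: "\<forall>b\<in>Basis. \<bar>x \<bullet> b - t \<bullet> b\<bar> < a \<bullet> b" using Bx by blast
      show "x \<in> ?E" unfolding mem
      proof
        fix b :: 'c assume b: "b \<in> Basis"
        have "\<bar>x \<bullet> b - t \<bullet> b\<bar> \<le> L" using h b L0(2)[OF b] by force
        then show "cos (pi / L * (a \<bullet> b)) < cos (pi / L * (x \<bullet> b - t \<bullet> b))"
          using cos_cmp[OF L0(1) _ L0(2)[OF b]] a b h by auto
      qed
    qed
    have sub2: "?E \<subseteq> ?B \<union> T n"
    proof
      fix x assume x: "x \<in> ?E"
      show "x \<in> ?B \<union> T n"
      proof (cases "x \<in> T n")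
        case False
        then have nl: "norm (x - t) \<le> L" unfolding T_def L_def by simp
        have le: "\<bar>x \<bullet> b - t \<bullet> b\<bar> \<le> L" if "b \<in> Basis" for b
          using Basis_le_norm[OF that, of "x - t"] nl by (simp add: inner_diff_left)
        have "\<forall>b\<in>Basis. \<bar>x \<bullet> b - t \<bullet> b\<bar> < a \<bullet> b"
        proof
          fix b :: 'c assume b: "b \<in> Basis"
          have "cos (pi / L * (a \<bullet> b)) < cos (pi / L * (x \<bullet> b - t \<bullet> b))"
            using x b unfolding mem by blast
          then show "\<bar>x \<bullet> b - t \<bullet> b\<bar> < a \<bullet> b"
            using cos_cmp[OF L0(1) _ L0(2)[OF b] le[OF b]] a b
            by (simp add: less_imp_le)
        qed
        then show ?thesis using Bx by blast
      qed simp
    qed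
    have "measure P ?B \<le> measure P ?E"
      using sub1 Em P(2) by (intro P.finite_measure_mono) auto
    also have "\<dots> = measure Q ?E"
      by (rule open_eq[OF P Q ch])
    also have "\<dots> \<le> measure Q (?B \<union> T n)"
      using sub2 Q(2) Tm by (intro Q.finite_measure_mono) auto
    also have "\<dots> \<le> measure Q ?B + measure Q (T n)"
      using Q(2) Tm by (intro measure_Un_le) auto
    finally show ?thesis .
  qed
  have "(\<lambda>n. measure Q (T n)) \<longlonglongrightarrow> measure Q (\<Inter>n. T n)"
  proof (rule Q.finite_Lim_measure_decseq)
    show "range T \<subseteq> sets Q" using Tm Q(2) by auto
    show "decseq T" unfolding T_def decseq_def by auto
  qed
  moreover have "(\<Inter>n. T n) = {}"
  proof -
    have "x \<notin> (\<Inter>n. T n)" for x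
    proof -
      obtain n :: nat where "norm (x - t) < real n" using reals_Archimedean2 by blast
      then have "x \<notin> T n" unfolding T_def using c0 by auto
      then show ?thesis by blast
    qed
    then show ?thesis by blast
  qed
  ultimately have "(\<lambda>n. measure Q ?B + measure Q (T n)) \<longlonglongrightarrow> measure Q ?B + 0"
    by (intro tendsto_add) auto
  then show ?thesis
    using step by (intro tendsto_le[OF trivial_limit_sequentially]) auto
qed

lemma char_unique:
  fixes P Q :: "'c::euclidean_space measure"
  assumes P: "prob_space P" "sets P = sets borel" and Q: "prob_space Q" "sets Q = sets borel"
    and ch: "\<And>m. (CLINT x|P. cis (m \<bullet> x)) = (CLINT x|Q. cis (m \<bullet> x))"
  shows "P = Q"
proof -
  interpret P: prob_space P by fact
  interpret Q: prob_space Q by fact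
  let ?E = "range (\<lambda>(a, b). box a b :: 'c set)"
  have sE: "sets borel = sigma_sets UNIV ?E"
    by (subst borel_eq_box) (simp add: sets_measure_of)
  have eqbox: "emeasure P (box l u) = emeasure Q (box l u)" for l u :: 'c
  proof (cases "\<forall>b\<in>Basis. l \<bullet> b < u \<bullet> b")
    case True
    define t where "t = (1/2) *\<^sub>R (l + u)"
    define a where "a = (1/2) *\<^sub>R (u - l)"
    have tl: "t - a = l" "t + a = u" unfolding t_def a_def by (auto simp: algebra_simps scaleR_2[symmetric])
    have a0: "\<forall>b\<in>Basis. 0 < a \<bullet> b" using True unfolding a_def by (auto simp: inner_diff_left)
    have ch': "\<And>m. (CLINT x|Q. cis (m \<bullet> x)) = (CLINT x|P. cis (m \<bullet> x))" using ch by simp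
    have "measure P (box l u) = measure Q (box l u)"
      using box_le[OF P Q ch a0, of t] box_le[OF Q P ch' a0, of t] unfolding tl by simp
    then show ?thesis
      using P(2) Q(2) by (simp add: P.emeasure_eq_measure Q.emeasure_eq_measure)
  next
    case False
    then have "box l u = {}" by (auto simp: box_eq_empty not_less)
    then show ?thesis by simp
  qed
  show ?thesis
  proof (rule measure_eqI_generator_eq[where E="?E" and \<Omega>=UNIV and A="\<lambda>n. box (- real n *\<^sub>R One) (real n *\<^sub>R One)"])
    show "Int_stable ?E"
      by (auto simp: Int_stable_def box_Int_box)
    show "?E \<subseteq> Pow UNIV" by simp
    show "\<And>X. X \<in> ?E \<Longrightarrow> emeasure P X = emeasure Q X" using eqbox by auto
    show "sets P = sigma_sets UNIV ?E" using P(2) sE by simp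
    show "sets Q = sigma_sets UNIV ?E" using Q(2) sE by simp
    show "range (\<lambda>n. box (- real n *\<^sub>R One) (real n *\<^sub>R One)) \<subseteq> ?E" by auto
    show "(\<Union>n. box (- real n *\<^sub>R One) (real n *\<^sub>R One)) = (UNIV :: 'c set)"
    proof -
      have "x \<in> (\<Union>n. box (- real n *\<^sub>R One) (real n *\<^sub>R One))" for x :: 'c
      proof -
        obtain n :: nat where n: "norm x < real n" using reals_Archimedean2 by blast
        have "\<bar>x \<bullet> i\<bar> < real n" if "i \<in> Basis" for i
          using Basis_le_norm[OF that, of x] n by linarith
        then have "x \<in> box (- real n *\<^sub>R One) (real n *\<^sub>R One)"
          by (force simp: mem_box abs_less_iff)
        then show ?thesis by blast
      qed
      then show ?thesis by blast
    qed
    show "\<And>i. emeasure P (box (- real i *\<^sub>R One) (real i *\<^sub>R One)) \<noteq> \<infinity>" by simp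
  qed
qed

lemma isCont_cf:
  fixes Z :: "'w \<Rightarrow> 'c::euclidean_space"
  assumes "prob_space M" "Z \<in> borel_measurable M"
  shows "isCont (\<lambda>z. CLINT \<omega>|M. cis (z \<bullet> Z \<omega>)) z0"
  unfolding continuous_at_sequentially
proof safe
  interpret prob_space M by fact
  fix S assume S: "S \<longlonglongrightarrow> z0"
  show "((\<lambda>z. CLINT \<omega>|M. cis (z \<bullet> Z \<omega>)) \<circ> S) \<longlonglongrightarrow> (CLINT \<omega>|M. cis (z0 \<bullet> Z \<omega>))"
    unfolding comp_def
  proof (intro integral_dominated_convergence[where w="\<lambda>_. 1"])
    have m: "(\<lambda>\<omega>. cis (z \<bullet> Z \<omega>)) \<in> borel_measurable M" for z
      by (rule measurable_compose[OF assms(2), of "\<lambda>x. cis (z \<bullet> x)"])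
        (intro borel_measurable_continuous_onI continuous_intros)
    show "(\<lambda>\<omega>. cis (z0 \<bullet> Z \<omega>)) \<in> borel_measurable M" by (rule m)
    show "(\<lambda>\<omega>. cis (S i \<bullet> Z \<omega>)) \<in> borel_measurable M" for i by (rule m)
  qed (auto intro!: tendsto_intros S)
qed

lemma levy_sigma_finite:
  fixes \<rho> :: "'c::euclidean_space measure"
  assumes "levy_measure \<rho>"
  shows "sigma_finite_measure \<rho>"
proof
  have sets: "sets \<rho> = sets borel" and z: "emeasure \<rho> {0} = 0"
    and fin: "(\<integral>\<^sup>+ r. ennreal (min 1 (norm r ^ 2)) \<partial>\<rho>) < \<infinity>"
    using assms by (auto simp: levy_measure_def)
  have sp: "space \<rho> = UNIV" using sets_eq_imp_space_eq[OF sets] by simp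
  define S where "S n = {r::'c. 1 / real (Suc n) \<le> norm r}" for n
  let ?A = "insert {0} (range S)"
  have Sm: "S n \<in> sets \<rho>" for n unfolding sets S_def by measurable
  have finS: "emeasure \<rho> (S n) \<noteq> \<infinity>" for n
  proof
    assume inf: "emeasure \<rho> (S n) = \<infinity>"
    define c where "c = (1 / real (Suc n))^2"
    have c0: "0 < c" unfolding c_def by simp
    have "ennreal c * emeasure \<rho> (S n) = (\<integral>\<^sup>+ r. ennreal c * indicator (S n) r \<partial>\<rho>)"
      using Sm by (simp add: nn_integral_cmult_indicator)
    also have "\<dots> \<le> (\<integral>\<^sup>+ r. ennreal (min 1 (norm r ^ 2)) \<partial>\<rho>)"
    proof (intro nn_integral_mono)
      fix r :: 'c
      show "ennreal c * indicator (S n) r \<le> ennreal (min 1 (norm r ^ 2))"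
      proof (cases "r \<in> S n")
        case True
        then have h: "1 / real (Suc n) \<le> norm r" unfolding S_def by simp
        have "c \<le> norm r ^ 2" unfolding c_def
          by (rule power_mono[OF h]) simp
        moreover have "c \<le> 1" unfolding c_def by (simp add: power_le_one)
        ultimately show ?thesis using True by simp
      qed simp
    qed
    finally show False using inf fin c0 by (simp add: ennreal_mult_top)
  qed
  show "\<exists>A. countable A \<and> A \<subseteq> sets \<rho> \<and> \<Union> A = space \<rho> \<and> (\<forall>a\<in>A. emeasure \<rho> a \<noteq> \<infinity>)"
  proof (intro exI[of _ ?A] conjI)
    show "countable ?A" by simp
    show "?A \<subseteq> sets \<rho>" using Sm sets by auto
    show "\<Union> ?A = space \<rho>"
    proof -
      have "r \<in> \<Union> ?A" for r :: 'c
      proof (cases "r = 0")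
        case False
        then obtain n where "inverse (real (Suc n)) < norm r"
          using reals_Archimedean[of "norm r"] by auto
        then have "r \<in> S n" unfolding S_def by (simp add: field_simps)
        then show ?thesis by blast
      qed simp
      then show ?thesis using sp by blast
    qed
    show "\<forall>a\<in>?A. emeasure \<rho> a \<noteq> \<infinity>" using z finS by auto
  qed
qed

lemma indep_iff_distr:
  fixes M :: "'w measure" and X :: "'w \<Rightarrow> 'a::euclidean_space" and Y :: "'w \<Rightarrow> 'b::euclidean_space"
  assumes "prob_space M" and X: "X \<in> borel_measurable M" and Y: "Y \<in> borel_measurable M"
  shows "prob_space.indep_set M {X -` A \<inter> space M | A. A \<in> sets borel}
      {Y -` B \<inter> space M | B. B \<in> sets borel} \<longleftrightarrow>
     distr M borel (\<lambda>\<omega>. (X \<omega>, Y \<omega>)) = distr M borel X \<Otimes>\<^sub>M distr M borel Y"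
proof -
  interpret M: prob_space M by fact
  have XY: "(\<lambda>\<omega>. (X \<omega>, Y \<omega>)) \<in> M \<rightarrow>\<^sub>M borel"
    using measurable_Pair[OF X Y] by (simp add: borel_prod)
  define PXY where "PXY = distr M borel (\<lambda>\<omega>. (X \<omega>, Y \<omega>))"
  define PX where "PX = distr M borel X"
  define PY where "PY = distr M borel Y"
  interpret PX: prob_space PX unfolding PX_def by (rule M.prob_space_distr[OF X])
  interpret PY: prob_space PY unfolding PY_def by (rule M.prob_space_distr[OF Y])
  interpret PXY: prob_space PXY unfolding PXY_def by (rule M.prob_space_distr[OF XY])
  interpret PQ: pair_prob_space PX PY by unfold_locales
  have rect: "A \<times> B \<in> sets (borel :: ('a \<times> 'b) measure)" if "A \<in> sets borel" "B \<in> sets borel" for A B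
  proof -
    have "A \<times> B \<in> sets (borel \<Otimes>\<^sub>M borel :: ('a \<times> 'b) measure)" using that by auto
    then show ?thesis unfolding borel_prod .
  qed
  have mXY: "measure PXY (A \<times> B) = M.prob (X -` A \<inter> space M \<inter> (Y -` B \<inter> space M))"
    if "A \<in> sets borel" "B \<in> sets borel" for A B
  proof -
    have "measure PXY (A \<times> B) = measure M ((\<lambda>\<omega>. (X \<omega>, Y \<omega>)) -` (A \<times> B) \<inter> space M)"
      unfolding PXY_def using rect[OF that] by (rule measure_distr[OF XY])
    also have "(\<lambda>\<omega>. (X \<omega>, Y \<omega>)) -` (A \<times> B) \<inter> space M = X -` A \<inter> space M \<inter> (Y -` B \<inter> space M)"
      by auto
    finally show ?thesis .
  qed
  have mQ: "measure (PX \<Otimes>\<^sub>M PY) (A \<times> B) = M.prob (X -` A \<inter> space M) * M.prob (Y -` B \<inter> space M)"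
    if "A \<in> sets borel" "B \<in> sets borel" for A B
  proof -
    have "emeasure (PX \<Otimes>\<^sub>M PY) (A \<times> B) = emeasure PX A * emeasure PY B"
      by (rule PY.emeasure_pair_measure_Times) (use that in \<open>auto simp: PX_def PY_def\<close>)
    then have "measure (PX \<Otimes>\<^sub>M PY) (A \<times> B) = measure PX A * measure PY B"
      by (simp add: measure_def enn2real_mult)
    then show ?thesis using that unfolding PX_def PY_def
      by (simp add: measure_distr[OF X] measure_distr[OF Y])
  qed
  have ev: "{X -` A \<inter> space M | A. A \<in> sets borel} \<subseteq> M.events"
    "{Y -` B \<inter> space M | B. B \<in> sets borel} \<subseteq> M.events"
    using X Y by (auto simp: measurable_sets)
  have "M.indep_set {X -` A \<inter> space M | A. A \<in> sets borel} {Y -` B \<inter> space M | B. B \<in> sets borel}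
    \<longleftrightarrow> (\<forall>A\<in>sets borel. \<forall>B\<in>sets borel. measure PXY (A \<times> B) = measure (PX \<Otimes>\<^sub>M PY) (A \<times> B))"
    unfolding M.indep_sets2_eq
  proof (intro iffI ballI conjI)
    assume H: "{X -` A \<inter> space M |A. A \<in> sets borel} \<subseteq> M.events \<and>
      {Y -` B \<inter> space M |B. B \<in> sets borel} \<subseteq> M.events \<and>
      (\<forall>a\<in>{X -` A \<inter> space M |A. A \<in> sets borel}. \<forall>b\<in>{Y -` B \<inter> space M |B. B \<in> sets borel}.
          M.prob (a \<inter> b) = M.prob a * M.prob b)"
    fix A :: "'a set" and B :: "'b set" assume AB: "A \<in> sets borel" "B \<in> sets borel"
    have "X -` A \<inter> space M \<in> {X -` A \<inter> space M |A. A \<in> sets borel}" using AB by blast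
    moreover have "Y -` B \<inter> space M \<in> {Y -` B \<inter> space M |B. B \<in> sets borel}" using AB by blast
    ultimately show "measure PXY (A \<times> B) = measure (PX \<Otimes>\<^sub>M PY) (A \<times> B)"
      using H AB by (simp only: mXY mQ)
  next
    assume H: "\<forall>A\<in>sets borel. \<forall>B\<in>sets borel. measure PXY (A \<times> B) = measure (PX \<Otimes>\<^sub>M PY) (A \<times> B)"
    show "{X -` A \<inter> space M |A. A \<in> sets borel} \<subseteq> M.events" using ev by blast
    show "{Y -` B \<inter> space M |B. B \<in> sets borel} \<subseteq> M.events" using ev by blast
    fix a b assume "a \<in> {X -` A \<inter> space M |A. A \<in> sets borel}" "b \<in> {Y -` B \<inter> space M |B. B \<in> sets borel}"
    then obtain A B where AB: "a = X -` A \<inter> space M" "A \<in> sets borel" "b = Y -` B \<inter> space M" "B \<in> sets borel"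
      by blast
    show "M.prob (a \<inter> b) = M.prob a * M.prob b"
      using H AB mXY[OF AB(2,4)] mQ[OF AB(2,4)] by simp
  qed
  also have "\<dots> \<longleftrightarrow> PXY = PX \<Otimes>\<^sub>M PY"
  proof
    assume H: "\<forall>A\<in>sets borel. \<forall>B\<in>sets borel. measure PXY (A \<times> B) = measure (PX \<Otimes>\<^sub>M PY) (A \<times> B)"
    let ?G = "{A \<times> B | A B. A \<in> sets (borel::'a measure) \<and> B \<in> sets (borel::'b measure)}"
    have sG: "sets (borel :: ('a \<times> 'b) measure) = sigma_sets UNIV ?G"
      by (subst borel_prod[symmetric]) (simp add: sets_pair_measure)
    have sPXY: "sets PXY = sets borel" unfolding PXY_def by simp
    have sQ: "sets (PX \<Otimes>\<^sub>M PY) = sets borel"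
      unfolding PX_def PY_def by (subst borel_prod[symmetric], intro sets_pair_measure_cong) auto
    show "PXY = PX \<Otimes>\<^sub>M PY"
    proof (rule measure_eqI_generator_eq[where E="?G" and \<Omega>=UNIV and A="\<lambda>_. UNIV"])
      show "Int_stable ?G" by (rule Int_stable_pair_measure_generator)
      show "?G \<subseteq> Pow UNIV" by simp
      show "emeasure PXY Z = emeasure (PX \<Otimes>\<^sub>M PY) Z" if Zin: "Z \<in> ?G" for Z
      proof -
        obtain A B where AB: "Z = A \<times> B" "A \<in> sets borel" "B \<in> sets borel" using Zin by blast
        have "measure PXY Z = measure (PX \<Otimes>\<^sub>M PY) Z" using H AB by simp
        then show ?thesis by (simp add: PXY.emeasure_eq_measure PQ.emeasure_eq_measure)
      qed
      show "sets PXY = sigma_sets UNIV ?G" using sPXY sG by simp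
      show "sets (PX \<Otimes>\<^sub>M PY) = sigma_sets UNIV ?G" using sQ sG by simp
      show "range (\<lambda>_. UNIV) \<subseteq> ?G"
      proof -
        have "(UNIV :: ('a \<times> 'b) set) = UNIV \<times> UNIV" by simp
        moreover have "(UNIV :: 'a set) \<in> sets borel" "(UNIV :: 'b set) \<in> sets borel" by simp_all
        ultimately have "(UNIV :: ('a \<times> 'b) set) \<in> ?G" by blast
        then show ?thesis by auto
      qed
      show "(\<Union>i. UNIV) = UNIV" by simp
      show "emeasure PXY UNIV \<noteq> \<infinity>" for i by simp
    qed
  qed auto
  finally show ?thesis unfolding PXY_def PX_def PY_def .
qed

lemma zero_on_support:
  fixes \<mu> :: "'a::euclidean_space measure" and \<nu> :: "'b::euclidean_space measure"
    and D :: "'a \<times> 'b \<Rightarrow> complex"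
  assumes sm: "sets \<mu> = sets borel" and sn: "sets \<nu> = sets borel"
    and fm: "full_support \<mu>" and fn: "full_support \<nu>"
    and sf: "sigma_finite_measure \<nu>"
    and cD: "continuous_on UNIV D"
    and I: "(\<integral>\<^sup>+ st. ennreal ((cmod (D st))\<^sup>2) \<partial>(\<mu> \<Otimes>\<^sub>M \<nu>)) = 0"
    and s0: "s0 \<noteq> 0" and t0: "t0 \<noteq> 0"
  shows "D (s0, t0) = 0"
proof (rule ccontr)
  interpret N: sigma_finite_measure \<nu> by fact
  assume nz: "D (s0, t0) \<noteq> 0"
  obtain e where e: "e > 0" "\<And>z. dist z (s0, t0) < e \<Longrightarrow> dist (D z) (D (s0, t0)) < cmod (D (s0, t0))"
    using cD nz unfolding continuous_on_iff by (metis UNIV_I zero_less_norm_iff)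
  have Dnz: "D z \<noteq> 0" if "dist z (s0, t0) < e" for z
    using e(2)[OF that] by (auto simp: dist_norm)
  define r1 where "r1 = min (e / 2) (norm s0)"
  define r2 where "r2 = min (e / 2) (norm t0)"
  have r: "r1 > 0" "r2 > 0" using e s0 t0 unfolding r1_def r2_def by auto
  let ?U = "ball s0 r1" and ?V = "ball t0 r2"
  have U0: "0 \<notin> ?U" by (auto simp: r1_def dist_norm)
  have V0: "0 \<notin> ?V" by (auto simp: r2_def dist_norm)
  have posU: "emeasure \<mu> ?U > 0" using fm U0 r unfolding full_support_def by auto
  have posV: "emeasure \<nu> ?V > 0" using fn V0 r unfolding full_support_def by auto
  have UV: "emeasure (\<mu> \<Otimes>\<^sub>M \<nu>) (?U \<times> ?V) = emeasure \<mu> ?U * emeasure \<nu> ?V"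
    by (rule N.emeasure_pair_measure_Times) (auto simp: sm sn)
  have posUV: "emeasure (\<mu> \<Otimes>\<^sub>M \<nu>) (?U \<times> ?V) > 0"
    unfolding UV using posU posV by (simp add: ennreal_zero_less_mult_iff)
  have spm: "space \<mu> = UNIV" using sets_eq_imp_space_eq[OF sm] by simp
  have spn: "space \<nu> = UNIV" using sets_eq_imp_space_eq[OF sn] by simp
  have sP: "sets (\<mu> \<Otimes>\<^sub>M \<nu>) = sets (borel :: ('a \<times> 'b) measure)"
    by (subst borel_prod[symmetric], intro sets_pair_measure_cong) (auto simp: sm sn)
  have Dm: "D \<in> borel_measurable borel" by (rule borel_measurable_continuous_onI[OF cD])
  have meas: "(\<lambda>st. ennreal ((cmod (D st))\<^sup>2)) \<in> borel_measurable (\<mu> \<Otimes>\<^sub>M \<nu>)"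
    unfolding measurable_cong_sets[OF sP refl] using Dm by measurable
  have "AE st in \<mu> \<Otimes>\<^sub>M \<nu>. ennreal ((cmod (D st))\<^sup>2) = 0"
    using I nn_integral_0_iff_AE[OF meas] by simp
  then obtain N where N: "{x \<in> space (\<mu> \<Otimes>\<^sub>M \<nu>). \<not> ennreal ((cmod (D x))\<^sup>2) = 0} \<subseteq> N"
    "emeasure (\<mu> \<Otimes>\<^sub>M \<nu>) N = 0" "N \<in> sets (\<mu> \<Otimes>\<^sub>M \<nu>)"
    by (rule AE_E)
  have sub: "?U \<times> ?V \<subseteq> N"
  proof
    fix z assume z: "z \<in> ?U \<times> ?V"
    obtain a b where ab: "z = (a, b)" by (cases z)
    have "dist a s0 < e / 2" "dist b t0 < e / 2" using z ab r1_def r2_def by (auto simp: dist_commute)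
    then have "dist z (s0, t0) < e"
      using sqrt_sum_squares_le_sum_abs[of "dist a s0" "dist b t0"] ab
      by (simp add: dist_Pair_Pair)
    then have "D z \<noteq> 0" by (rule Dnz)
    then have "\<not> ennreal ((cmod (D z))\<^sup>2) = 0" by simp
    then show "z \<in> N" using N(1) by (auto simp: space_pair_measure spm spn)
  qed
  have "emeasure (\<mu> \<Otimes>\<^sub>M \<nu>) (?U \<times> ?V) \<le> emeasure (\<mu> \<Otimes>\<^sub>M \<nu>) N"
    by (rule emeasure_mono[OF sub N(3)])
  then show False using posUV N(2) by simp
qed

theorem lemma3p2:
  fixes \<mu> :: "'a::euclidean_space measure" and \<nu> :: "'b::euclidean_space measure"
    and M :: "'w measure" and X :: "'w \<Rightarrow> 'a" and Y :: "'w \<Rightarrow> 'b"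
  assumes "levy_measure \<mu>" "symmetric_measure \<mu>" "full_support \<mu>"
    and "levy_measure \<nu>" "symmetric_measure \<nu>" "full_support \<nu>"
    and "prob_space M"
    and "X \<in> borel_measurable M" "Y \<in> borel_measurable M"
  shows "prob_space.indep_set M {X -` A \<inter> space M | A. A \<in> sets borel}
      {Y -` B \<inter> space M | B. B \<in> sets borel} \<longleftrightarrow> dcov2 \<mu> \<nu> M X Y = 0"
proof -
  interpret M: prob_space M by fact
  have X: "X \<in> borel_measurable M" and Y: "Y \<in> borel_measurable M" by fact+
  have XY: "(\<lambda>\<omega>. (X \<omega>, Y \<omega>)) \<in> M \<rightarrow>\<^sub>M borel"
    using measurable_Pair[OF X Y] by (simp add: borel_prod)
  define PXY where "PXY = distr M borel (\<lambda>\<omega>. (X \<omega>, Y \<omega>))"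
  define PX where "PX = distr M borel X"
  define PY where "PY = distr M borel Y"
  interpret PX: prob_space PX unfolding PX_def by (rule M.prob_space_distr[OF X])
  interpret PY: prob_space PY unfolding PY_def by (rule M.prob_space_distr[OF Y])
  interpret PXY: prob_space PXY unfolding PXY_def by (rule M.prob_space_distr[OF XY])
  interpret PQ: pair_prob_space PX PY by unfold_locales
  have sPXY: "sets PXY = sets borel" unfolding PXY_def by simp
  have sQ: "sets (PX \<Otimes>\<^sub>M PY) = sets borel"
    unfolding PX_def PY_def by (subst borel_prod[symmetric], intro sets_pair_measure_cong) auto
  have cm: "(\<lambda>z. cis (m \<bullet> z)) \<in> borel_measurable borel" for m :: "'c::euclidean_space"
    by (intro borel_measurable_continuous_onI continuous_intros)
  have chXY: "(CLINT z|PXY. cis (m \<bullet> z)) = charf2 M X Y (fst m) (snd m)" for m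
  proof -
    obtain a b where m: "m = (a, b)" by (cases m)
    show ?thesis unfolding PXY_def integral_distr[OF XY cm] m by (simp add: charf2_def)
  qed
  have chQ: "(CLINT z|PX \<Otimes>\<^sub>M PY. cis (m \<bullet> z)) = charf M X (fst m) * charf M Y (snd m)" for m
  proof -
    obtain a b where m: "m = (a, b)" by (cases m)
    have int: "integrable (PX \<Otimes>\<^sub>M PY) (\<lambda>z. cis (m \<bullet> z))"
      by (rule PQ.integrable_const_bound[where B=1]) (auto simp: measurable_cong_sets[OF sQ refl] cm)
    have "(CLINT z|PX \<Otimes>\<^sub>M PY. cis (m \<bullet> z)) = (CLINT x|PX. (CLINT y|PY. cis (m \<bullet> (x, y))))"
      by (rule PQ.integral_fst'[OF int, symmetric])
    also have "\<dots> = (CLINT x|PX. cis (a \<bullet> x) * (CLINT y|PY. cis (b \<bullet> y)))"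
      unfolding m by (simp add: cis_mult[symmetric])
    also have "\<dots> = (CLINT x|PX. cis (a \<bullet> x)) * (CLINT y|PY. cis (b \<bullet> y))"
      by simp
    also have "\<dots> = charf M X a * charf M Y b"
      unfolding PX_def PY_def integral_distr[OF X cm] integral_distr[OF Y cm] charf_def ..
    finally show ?thesis using m by simp
  qed
  have ind: "M.indep_set {X -` A \<inter> space M | A. A \<in> sets borel} {Y -` B \<inter> space M | B. B \<in> sets borel}
      \<longleftrightarrow> PXY = PX \<Otimes>\<^sub>M PY"
    unfolding PXY_def PX_def PY_def by (rule indep_iff_distr[OF assms(7) X Y])
  show ?thesis unfolding ind
  proof
    assume eq: "PXY = PX \<Otimes>\<^sub>M PY"
    have "charf2 M X Y s t = charf M X s * charf M Y t" for s t
      using chXY[of "(s, t)"] chQ[of "(s, t)"] eq by simp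
    then show "dcov2 \<mu> \<nu> M X Y = 0" by (simp add: dcov2_def)
  next
    assume d: "dcov2 \<mu> \<nu> M X Y = 0"
    define D where "D st = charf2 M X Y (fst st) (snd st) - charf M X (fst st) * charf M Y (snd st)" for st
    have c1: "charf2 M X Y (fst st) (snd st) = (CLINT \<omega>|M. cis (st \<bullet> (X \<omega>, Y \<omega>)))" for st
      by (cases st) (simp add: charf2_def)
    have cD: "continuous_on UNIV D"
    proof -
      have a: "continuous_on UNIV (\<lambda>st. charf2 M X Y (fst st) (snd st))"
        unfolding c1 using isCont_cf[OF assms(7) XY] by (intro continuous_at_imp_continuous_on) auto
      have b: "continuous_on UNIV (\<lambda>s. charf M X s)"
        unfolding charf_def using isCont_cf[OF assms(7) X] by (intro continuous_at_imp_continuous_on) auto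
      have c: "continuous_on UNIV (\<lambda>s. charf M Y s)"
        unfolding charf_def using isCont_cf[OF assms(7) Y] by (intro continuous_at_imp_continuous_on) auto
      have b': "continuous_on UNIV (\<lambda>st. charf M X (fst st))"
        by (rule continuous_on_compose2[OF b continuous_on_fst[OF continuous_on_id]]) auto
      have c': "continuous_on UNIV (\<lambda>st. charf M Y (snd st))"
        by (rule continuous_on_compose2[OF c continuous_on_snd[OF continuous_on_id]]) auto
      show ?thesis unfolding D_def by (intro continuous_intros a b' c')
    qed
    have one: "charf M X 0 = 1" "charf M Y 0 = 1" by (simp_all add: charf_def M.prob_space)
    have D0: "D (s, t) = 0" for s t
    proof (cases "s = 0 \<or> t = 0")
      case True
      then show ?thesis by (auto simp: D_def one charf2_def charf_def M.prob_space)
    next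
      case False
      show ?thesis
      proof (rule zero_on_support[where \<mu>=\<mu> and \<nu>=\<nu>])
        show "sets \<mu> = sets borel" "sets \<nu> = sets borel"
          using assms(1,4) by (auto simp: levy_measure_def)
        show "full_support \<mu>" "full_support \<nu>" by fact+
        show "sigma_finite_measure \<nu>" by (rule levy_sigma_finite[OF assms(4)])
        show "continuous_on UNIV D" by (rule cD)
        show "(\<integral>\<^sup>+ st. ennreal ((cmod (D st))\<^sup>2) \<partial>(\<mu> \<Otimes>\<^sub>M \<nu>)) = 0"
          using d by (simp add: dcov2_def D_def)
        show "s \<noteq> 0" "t \<noteq> 0" using False by auto
      qed
    qed
    show "PXY = PX \<Otimes>\<^sub>M PY"
    proof (rule char_unique)
      show "prob_space PXY" "sets PXY = sets borel" "prob_space (PX \<Otimes>\<^sub>M PY)" "sets (PX \<Otimes>\<^sub>M PY) = sets borel"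
        using sPXY sQ PXY.prob_space_axioms PQ.prob_space_axioms by auto
      show "(CLINT z|PXY. cis (m \<bullet> z)) = (CLINT z|PX \<Otimes>\<^sub>M PY. cis (m \<bullet> z))" for m
        using D0[of "fst m" "snd m"] unfolding chXY chQ D_def by simp
    qed
  qed
qed

end
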